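(* Let $(\Omega,\mathcal{F},P)$ be a probability space with filtration $\{\mathcal{F}_t\}_{0\le t\le T}$. Let $(\delta_{st})_{0\le s\le t\le T}$ be nonnegative real numbers such that $\delta_{rs}\delta_{st}+\delta_{rs}+\delta_{st}=\delta_{rt}$ for all $r\le s\le t$. For $s\le t$ define \[\mathcal{Q}_{st}=\Big\{Q\ll P \text{ on } \mathcal{F}_t:\ Q|_{\mathcal{F}_s}=P,\ \frac{dQ}{dP}=1+g_{st}\text{ for some } g_{st}\in L^2(\mathcal{F}_t)\text{ with } E[g_{st}^2\mid\mathcal{F}_s]\le\delta_{st}^2\Big\}.\] Then: (1) for all $r\le s\le t$, $Q\in\mathcal{Q}_{rs}$ and $R\in\mathcal{Q}_{st}$, the probability measure $S\ll P$ with $\frac{dS}{dP}=\frac{dQ}{dP}\frac{dR}{dP}$ belongs to $\mathcal{Q}_{rt}$; (2) for all $A\in\mathcal{F}_s$ and $Q_1,Q_2\in\mathcal{Q}_{st}$, there exists $Q\in\mathcal{Q}_{st}$ with $\frac{dQ}{dP}=\frac{dQ_1}{dP}1_A+\frac{dQ_2}{dP}1_{A^c}$. *)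

theory Defs
  imports "HOL-Probability.Probability"
begin

definition Qcls ::
  "'a measure \<Rightarrow> (real \<Rightarrow> 'a measure) \<Rightarrow> (real \<Rightarrow> real \<Rightarrow> real) \<Rightarrow> real \<Rightarrow> real \<Rightarrow> 'a measure set"
where
  "Qcls M F \<delta> s t =
    {Q. prob_space Q \<and> sets Q = sets (F t) \<and>
        absolutely_continuous (restr_to_subalg M (F t)) Q \<and>
        (\<forall>A\<in>sets (F s). emeasure Q A = emeasure M A) \<and>
        (\<exists>g. g \<in> borel_measurable (F t) \<and>
             integrable M (\<lambda>x. (g x)\<^sup>2) \<and>
             (AE x in M. 0 \<le> 1 + g x) \<and>
             Q = density (restr_to_subalg M (F t)) (\<lambda>x. ennreal (1 + g x)) \<and>
             (AE x in M. real_cond_exp M (F s) (\<lambda>x. (g x)\<^sup>2) x \<le> (\<delta> s t)\<^sup>2))}"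

end

theory Submission
  imports Defs
begin


lemma AE_restr_mono:
  assumes "subalgebra M Fs" "subalgebra M Ft" "sets Fs \<subseteq> sets Ft"
    and "AE x in restr_to_subalg M Fs. P x"
  shows "AE x in restr_to_subalg M Ft. P x"
proof -
  obtain N where N: "\<And>x. x \<in> space (restr_to_subalg M Fs) - N \<Longrightarrow> P x" "N \<in> null_sets (restr_to_subalg M Fs)"
    using AE_E3[OF assms(4)] by auto
  have "N \<in> null_sets (restr_to_subalg M Ft)"
    using N(2) null_sets_restr_to_subalg[OF assms(1)] null_sets_restr_to_subalg[OF assms(2)] assms(3) by auto
  then show ?thesis using N(1) by (intro AE_I'[of N]) (auto simp: space_restr_to_subalg)
qed

lemma meas_mono:
  assumes "subalgebra M Fs" "subalgebra M Ft" "sets Fs \<subseteq> sets Ft" "f \<in> borel_measurable Fs"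
  shows "f \<in> borel_measurable Ft"
  using assms unfolding measurable_def subalgebra_def by auto

lemma sfs:
  assumes "prob_space M" "subalgebra M Fs"
  shows "sigma_finite_subalgebra M Fs"
proof -
  interpret prob_space M by fact
  have "finite_measure_subalgebra M Fs"
    by (simp add: assms(2) finite_measure_axioms finite_measure_subalgebra.intro finite_measure_subalgebra_axioms_def)
  then show ?thesis by (rule finite_measure_subalgebra_is_sigma_finite)
qed

lemma subalg_sub:
  assumes "subalgebra M Fs" "subalgebra M Ft" "sets Fs \<subseteq> sets Ft"
  shows "subalgebra Ft Fs"
  using assms unfolding subalgebra_def by auto

lemma abs_le_1_sq: "\<bar>y::real\<bar> \<le> 1 + y^2"
proof -
  have "0 \<le> (\<bar>y\<bar> - 1)^2" by simp
  also have "\<dots> = y^2 - 2*\<bar>y\<bar> + 1" by (simp add: power2_eq_square algebra_simps)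
  finally show ?thesis using zero_le_power2[of y] by linarith
qed

lemma sq_int_imp_int:
  fixes g :: "'a \<Rightarrow> real"
  assumes "prob_space M" "g \<in> borel_measurable M" "integrable M (\<lambda>x. (g x)^2)"
  shows "integrable M g"
proof -
  interpret prob_space M by fact
  have "integrable M (\<lambda>x. 1 + (g x)^2)" using assms by auto
  moreover have "\<And>x. norm (g x) \<le> norm (1 + (g x)^2)"
  proof -
    fix x
    have "\<bar>g x\<bar> \<le> 1 + (g x)^2" by (rule abs_le_1_sq)
    moreover have "\<bar>1 + (g x)^2\<bar> = 1 + (g x)^2" by (simp add: add_nonneg_nonneg)
    ultimately show "norm (g x) \<le> norm (1 + (g x)^2)" by simp
  qed
  ultimately show ?thesis
    using Bochner_Integration.integrable_bound[of M "\<lambda>x. 1 + (g x)^2" g] assms(2) by auto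
qed

lemma dens_eq:
  fixes g :: "'a \<Rightarrow> real"
  assumes P: "prob_space M" and t: "subalgebra M Ft"
    and g: "g \<in> borel_measurable Ft" "integrable M g" "AE x in M. 0 \<le> 1 + g x"
    and At: "A \<in> sets Ft"
  shows "emeasure (density (restr_to_subalg M Ft) (\<lambda>x. ennreal (1 + g x))) A
     = ennreal (measure M A + (\<integral>x. indicator A x * g x \<partial>M))"
    "0 \<le> measure M A + (\<integral>x. indicator A x * g x \<partial>M)"
proof -
  interpret prob_space M by fact
  have AM: "A \<in> sets M" using At t unfolding subalgebra_def by auto
  have gM[measurable]: "g \<in> borel_measurable M" using measurable_from_subalg[OF t g(1)] .
  have [measurable]: "g \<in> borel_measurable Ft" by (rule g(1))
  have [measurable]: "A \<in> sets Ft" by (rule At)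
  have "emeasure (density (restr_to_subalg M Ft) (\<lambda>x. ennreal (1 + g x))) A
      = (\<integral>\<^sup>+x. ennreal (1 + g x) * indicator A x \<partial>restr_to_subalg M Ft)"
    using At by (intro emeasure_density measurable_in_subalg[OF t]) (auto simp: sets_restr_to_subalg[OF t])
  also have "\<dots> = (\<integral>\<^sup>+x. ennreal (1 + g x) * indicator A x \<partial>M)"
    by (rule nn_integral_subalgebra2[OF t]) measurable
  also have "\<dots> = (\<integral>\<^sup>+x. ennreal ((1 + g x) * indicator A x) \<partial>M)"
    by (intro nn_integral_cong) (auto simp: indicator_def)
  also have "\<dots> = ennreal (\<integral>x. (1 + g x) * indicator A x \<partial>M)"
  proof (rule nn_integral_eq_integral)
    have "integrable M (\<lambda>x. indicator A x *\<^sub>R (1 + g x))"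
      using integrable_mult_indicator[OF AM, of "\<lambda>x. 1 + g x"] g(2) by auto
    then show "integrable M (\<lambda>x. (1 + g x) * indicator A x)" by (simp add: mult.commute)
    show "AE x in M. 0 \<le> (1 + g x) * indicator A x" using g(3) by (auto simp: indicator_def)
  qed
  finally have e1: "emeasure (density (restr_to_subalg M Ft) (\<lambda>x. ennreal (1 + g x))) A = ennreal (\<integral>x. (1 + g x) * indicator A x \<partial>M)" .
  have intA: "integrable M (\<lambda>x. indicator A x * g x)"
    using integrable_mult_indicator[OF AM g(2)] by simp
  have "(\<integral>x. (1 + g x) * indicator A x \<partial>M) = (\<integral>x. indicator A x + indicator A x * g x \<partial>M)"
    by (intro Bochner_Integration.integral_cong) (auto simp: algebra_simps)
  also have "\<dots> = measure M A + (\<integral>x. indicator A x * g x \<partial>M)"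
    using intA AM by (subst Bochner_Integration.integral_add) (auto simp: emeasure_eq_measure)
  finally have e2: "(\<integral>x. (1 + g x) * indicator A x \<partial>M) = measure M A + (\<integral>x. indicator A x * g x \<partial>M)" .
  have nn: "0 \<le> (\<integral>x. (1 + g x) * indicator A x \<partial>M)"
    using g(3) by (intro integral_nonneg_AE) (auto simp: indicator_def)
  show "emeasure (density (restr_to_subalg M Ft) (\<lambda>x. ennreal (1 + g x))) A
     = ennreal (measure M A + (\<integral>x. indicator A x * g x \<partial>M))" using e1 e2 by simp
  show "0 \<le> measure M A + (\<integral>x. indicator A x * g x \<partial>M)" using nn e2 by simp
qed

lemma mean_zero:
  fixes g :: "'a \<Rightarrow> real"
  assumes P: "prob_space M" and t: "subalgebra M Ft"
    and g: "g \<in> borel_measurable Ft" "integrable M g" "AE x in M. 0 \<le> 1 + g x"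
    and eq: "emeasure (density (restr_to_subalg M Ft) (\<lambda>x. ennreal (1 + g x))) A = emeasure M A"
    and At: "A \<in> sets Ft"
  shows "(\<integral>x. indicator A x * g x \<partial>M) = 0"
proof -
  interpret prob_space M by fact
  note d = dens_eq[OF P t g At]
  have "measure M A = measure M A + (\<integral>x. indicator A x * g x \<partial>M)"
    using d eq by (simp add: emeasure_eq_measure)
  then show ?thesis by simp
qed

lemma agree:
  fixes g :: "'a \<Rightarrow> real"
  assumes P: "prob_space M" and t: "subalgebra M Ft"
    and g: "g \<in> borel_measurable Ft" "integrable M g" "AE x in M. 0 \<le> 1 + g x"
    and z: "(\<integral>x. indicator A x * g x \<partial>M) = 0"
    and At: "A \<in> sets Ft"
  shows "emeasure (density (restr_to_subalg M Ft) (\<lambda>x. ennreal (1 + g x))) A = emeasure M A"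
proof -
  interpret prob_space M by fact
  show ?thesis using dens_eq[OF P t g At] z by (simp add: emeasure_eq_measure)
qed

lemma ce_zero:
  fixes g :: "'a \<Rightarrow> real"
  assumes P: "prob_space M" and s: "subalgebra M Fs" and gi: "integrable M g"
    and z: "\<And>A. A \<in> sets Fs \<Longrightarrow> (\<integral>x. indicator A x * g x \<partial>M) = 0"
  shows "AE x in M. real_cond_exp M Fs g x = 0"
proof -
  interpret sigma_finite_subalgebra M Fs using sfs[OF P s] .
  show ?thesis
    by (rule real_cond_exp_charact) (use z gi in \<open>auto simp: set_lebesgue_integral_def\<close>)
qed

lemma unpack:
  assumes P: "prob_space M" and s: "subalgebra M (F s)" and t: "subalgebra M (F t)"
    and st: "sets (F s) \<subseteq> sets (F t)" and Q: "Q \<in> Qcls M F \<delta> s t"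
  obtains g where "g \<in> borel_measurable (F t)" "integrable M (\<lambda>x. (g x)\<^sup>2)" "integrable M g"
    "AE x in M. 0 \<le> 1 + g x"
    "Q = density (restr_to_subalg M (F t)) (\<lambda>x. ennreal (1 + g x))"
    "AE x in M. real_cond_exp M (F s) (\<lambda>x. (g x)\<^sup>2) x \<le> (\<delta> s t)\<^sup>2"
    "AE x in restr_to_subalg M (F t). RN_deriv (restr_to_subalg M (F t)) Q x = ennreal (1 + g x)"
    "\<And>A. A \<in> sets (F s) \<Longrightarrow> (\<integral>x. indicator A x * g x \<partial>M) = 0"
    "AE x in M. real_cond_exp M (F s) g x = 0"
proof -
  from Q obtain g where g: "g \<in> borel_measurable (F t)" "integrable M (\<lambda>x. (g x)\<^sup>2)"
    "AE x in M. 0 \<le> 1 + g x"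
    "Q = density (restr_to_subalg M (F t)) (\<lambda>x. ennreal (1 + g x))"
    "AE x in M. real_cond_exp M (F s) (\<lambda>x. (g x)\<^sup>2) x \<le> (\<delta> s t)\<^sup>2"
    and ag: "\<forall>A\<in>sets (F s). emeasure Q A = emeasure M A"
    unfolding Qcls_def by blast
  have gi: "integrable M g"
    using sq_int_imp_int[OF P measurable_from_subalg[OF t g(1)] g(2)] .
  have mz: "(\<integral>x. indicator A x * g x \<partial>M) = 0" if A: "A \<in> sets (F s)" for A
    using mean_zero[OF P t g(1) gi g(3)] ag A st g(4) by auto
  have rn: "AE x in restr_to_subalg M (F t). RN_deriv (restr_to_subalg M (F t)) Q x = ennreal (1 + g x)"
  proof -
    interpret Pt: prob_space "restr_to_subalg M (F t)" using prob_space_restr_to_subalg[OF t P] .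
    have "AE x in restr_to_subalg M (F t). ennreal (1 + g x) = RN_deriv (restr_to_subalg M (F t)) Q x"
    proof (rule Pt.RN_deriv_unique)
      have "(\<lambda>x. ennreal (1 + g x)) \<in> borel_measurable (F t)" using g(1) by measurable
      then show "(\<lambda>x. ennreal (1 + g x)) \<in> borel_measurable (restr_to_subalg M (F t))"
        by (rule measurable_in_subalg[OF t])
    qed (use g(4) in auto)
    then show ?thesis by auto
  qed
  show ?thesis
    by (rule that[OF g(1,2) gi g(3,4,5) rn mz ce_zero[OF P s gi mz]])
qed

lemma pack:
  fixes g :: "'a \<Rightarrow> real"
  assumes P: "prob_space M" and s: "subalgebra M (F s)" and t: "subalgebra M (F t)"
    and st: "sets (F s) \<subseteq> sets (F t)"
    and g: "g \<in> borel_measurable (F t)" "integrable M (\<lambda>x. (g x)\<^sup>2)" "AE x in M. 0 \<le> 1 + g x"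
    and mz: "\<And>A. A \<in> sets (F s) \<Longrightarrow> (\<integral>x. indicator A x * g x \<partial>M) = 0"
    and ce: "AE x in M. real_cond_exp M (F s) (\<lambda>x. (g x)\<^sup>2) x \<le> (\<delta> s t)\<^sup>2"
  shows "density (restr_to_subalg M (F t)) (\<lambda>x. ennreal (1 + g x)) \<in> Qcls M F \<delta> s t"
proof -
  interpret prob_space M by fact
  have gi: "integrable M g"
    using sq_int_imp_int[OF P measurable_from_subalg[OF t g(1)] g(2)] .
  have ag: "emeasure (density (restr_to_subalg M (F t)) (\<lambda>x. ennreal (1 + g x))) A = emeasure M A"
    if A: "A \<in> sets (F s)" for A
    using agree[OF P t g(1) gi g(3) mz[OF A]] A st by auto
  have sp: "space M \<in> sets (F s)" using s unfolding subalgebra_def by (metis sets.top)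
  have "prob_space (density (restr_to_subalg M (F t)) (\<lambda>x. ennreal (1 + g x)))"
    by (rule prob_spaceI) (simp add: ag[OF sp] space_restr_to_subalg emeasure_space_1)
  moreover have "absolutely_continuous (restr_to_subalg M (F t)) (density (restr_to_subalg M (F t)) (\<lambda>x. ennreal (1 + g x)))"
  proof (rule absolutely_continuousI_density)
      have "(\<lambda>x. ennreal (1 + g x)) \<in> borel_measurable (F t)" using g(1) by measurable
      then show "(\<lambda>x. ennreal (1 + g x)) \<in> borel_measurable (restr_to_subalg M (F t))"
        by (rule measurable_in_subalg[OF t])
  qed
  ultimately show ?thesis
    unfolding Qcls_def using ag g ce by (auto simp: sets_restr_to_subalg[OF t])
qed

lemma part2:
  assumes P: "prob_space M" and s: "subalgebra M (F s)" and t: "subalgebra M (F t)"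
    and st: "sets (F s) \<subseteq> sets (F t)" and A: "A \<in> sets (F s)"
    and Q1: "Q1 \<in> Qcls M F \<delta> s t" and Q2: "Q2 \<in> Qcls M F \<delta> s t"
  shows "\<exists>Q\<in>Qcls M F \<delta> s t.
               Q = density (restr_to_subalg M (F t))
                 (\<lambda>x. RN_deriv (restr_to_subalg M (F t)) Q1 x * indicator A x
                    + RN_deriv (restr_to_subalg M (F t)) Q2 x * indicator (space M - A) x)"
proof -
  interpret prob_space M by fact
  interpret S: sigma_finite_subalgebra M "F s" using sfs[OF P s] .
  obtain g1 where g1: "g1 \<in> borel_measurable (F t)" "integrable M (\<lambda>x. (g1 x)\<^sup>2)" "integrable M g1"
    "AE x in M. 0 \<le> 1 + g1 x"
    "Q1 = density (restr_to_subalg M (F t)) (\<lambda>x. ennreal (1 + g1 x))"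
    "AE x in M. real_cond_exp M (F s) (\<lambda>x. (g1 x)\<^sup>2) x \<le> (\<delta> s t)\<^sup>2"
    "AE x in restr_to_subalg M (F t). RN_deriv (restr_to_subalg M (F t)) Q1 x = ennreal (1 + g1 x)"
    "\<And>A. A \<in> sets (F s) \<Longrightarrow> (\<integral>x. indicator A x * g1 x \<partial>M) = 0"
    by (rule unpack[OF P s t st Q1]) blast
  obtain g2 where g2: "g2 \<in> borel_measurable (F t)" "integrable M (\<lambda>x. (g2 x)\<^sup>2)" "integrable M g2"
    "AE x in M. 0 \<le> 1 + g2 x"
    "Q2 = density (restr_to_subalg M (F t)) (\<lambda>x. ennreal (1 + g2 x))"
    "AE x in M. real_cond_exp M (F s) (\<lambda>x. (g2 x)\<^sup>2) x \<le> (\<delta> s t)\<^sup>2"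
    "AE x in restr_to_subalg M (F t). RN_deriv (restr_to_subalg M (F t)) Q2 x = ennreal (1 + g2 x)"
    "\<And>A. A \<in> sets (F s) \<Longrightarrow> (\<integral>x. indicator A x * g2 x \<partial>M) = 0"
    by (rule unpack[OF P s t st Q2]) blast
  have spFs: "space (F s) = space M" and spFt: "space (F t) = space M"
    using s t unfolding subalgebra_def by auto
  have As[measurable]: "A \<in> sets (F s)" by (rule A)
  have Acs[measurable]: "space M - A \<in> sets (F s)" using A spFs by (metis sets.compl_sets)
  have At[measurable]: "A \<in> sets (F t)" using A st by auto
  have Act[measurable]: "space M - A \<in> sets (F t)" using Acs st by auto
  have AM[measurable]: "A \<in> sets M" "space M - A \<in> sets M" using At Act t unfolding subalgebra_def by auto
  have Asp: "A \<subseteq> space M" using sets.sets_into_space[OF AM(1)] .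
  have [measurable]: "g1 \<in> borel_measurable (F t)" "g2 \<in> borel_measurable (F t)" using g1(1) g2(1) by auto
  have [measurable]: "g1 \<in> borel_measurable M" "g2 \<in> borel_measurable M"
    using measurable_from_subalg[OF t g1(1)] measurable_from_subalg[OF t g2(1)] by auto
  define g where "g x = indicator A x * g1 x + indicator (space M - A) x * g2 x" for x
  have gm[measurable]: "g \<in> borel_measurable (F t)" unfolding g_def by measurable
  have gsq: "(g x)\<^sup>2 = indicator A x * (g1 x)\<^sup>2 + indicator (space M - A) x * (g2 x)\<^sup>2" for x
    using Asp unfolding g_def by (auto simp: indicator_def)
  have i1: "integrable M (\<lambda>x. indicator A x * (g1 x)\<^sup>2)"
    using integrable_mult_indicator[OF AM(1) g1(2)] by simp
  have i2: "integrable M (\<lambda>x. indicator (space M - A) x * (g2 x)\<^sup>2)"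
    using integrable_mult_indicator[OF AM(2) g2(2)] by simp
  have gi2: "integrable M (\<lambda>x. (g x)\<^sup>2)" unfolding gsq using i1 i2 by auto
  have gnn: "AE x in M. 0 \<le> 1 + g x" using g1(4) g2(4) unfolding g_def
    by eventually_elim (auto simp: indicator_def)
  have mz: "(\<integral>x. indicator B x * g x \<partial>M) = 0" if B: "B \<in> sets (F s)" for B
  proof -
    have B1: "B \<inter> A \<in> sets (F s)" "B \<inter> (space M - A) \<in> sets (F s)" using B by auto
    have BM: "B \<inter> A \<in> sets M" "B \<inter> (space M - A) \<in> sets M" using B1 st t unfolding subalgebra_def by auto
    have "(\<integral>x. indicator B x * g x \<partial>M)
        = (\<integral>x. indicator (B \<inter> A) x * g1 x + indicator (B \<inter> (space M - A)) x * g2 x \<partial>M)"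
      unfolding g_def by (intro Bochner_Integration.integral_cong) (auto simp: indicator_def)
    also have "\<dots> = (\<integral>x. indicator (B \<inter> A) x * g1 x \<partial>M) + (\<integral>x. indicator (B \<inter> (space M - A)) x * g2 x \<partial>M)"
      using integrable_mult_indicator[OF BM(1) g1(3)] integrable_mult_indicator[OF BM(2) g2(3)]
      by (subst Bochner_Integration.integral_add) auto
    also have "\<dots> = 0" using g1(8)[OF B1(1)] g2(8)[OF B1(2)] by simp
    finally show ?thesis .
  qed
  have "AE x in M. real_cond_exp M (F s) (\<lambda>x. (g x)\<^sup>2) x
       = real_cond_exp M (F s) (\<lambda>x. indicator A x * (g1 x)\<^sup>2 + indicator (space M - A) x * (g2 x)\<^sup>2) x"
    unfolding gsq by simp
  moreover have "AE x in M. real_cond_exp M (F s) (\<lambda>x. indicator A x * (g1 x)\<^sup>2 + indicator (space M - A) x * (g2 x)\<^sup>2) x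
       = real_cond_exp M (F s) (\<lambda>x. indicator A x * (g1 x)\<^sup>2) x + real_cond_exp M (F s) (\<lambda>x. indicator (space M - A) x * (g2 x)\<^sup>2) x"
    by (rule S.real_cond_exp_add[OF i1 i2])
  moreover have "AE x in M. real_cond_exp M (F s) (\<lambda>x. indicator A x * (g1 x)\<^sup>2) x = indicator A x * real_cond_exp M (F s) (\<lambda>x. (g1 x)\<^sup>2) x"
    by (rule S.real_cond_exp_mult) (use i1 in auto)
  moreover have "AE x in M. real_cond_exp M (F s) (\<lambda>x. indicator (space M - A) x * (g2 x)\<^sup>2) x = indicator (space M - A) x * real_cond_exp M (F s) (\<lambda>x. (g2 x)\<^sup>2) x"
    by (rule S.real_cond_exp_mult) (use i2 in auto)
  ultimately have ce: "AE x in M. real_cond_exp M (F s) (\<lambda>x. (g x)\<^sup>2) x \<le> (\<delta> s t)\<^sup>2"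
    using g1(6) g2(6) by eventually_elim (auto simp: indicator_def)
  have Qin: "density (restr_to_subalg M (F t)) (\<lambda>x. ennreal (1 + g x)) \<in> Qcls M F \<delta> s t"
    by (rule pack[of M F s t g \<delta>, OF P s t st gm gi2 gnn mz ce])
  have "density (restr_to_subalg M (F t))
                 (\<lambda>x. RN_deriv (restr_to_subalg M (F t)) Q1 x * indicator A x
                    + RN_deriv (restr_to_subalg M (F t)) Q2 x * indicator (space M - A) x)
        = density (restr_to_subalg M (F t)) (\<lambda>x. ennreal (1 + g x))"
  proof (rule density_cong)
    show "(\<lambda>x. RN_deriv (restr_to_subalg M (F t)) Q1 x * indicator A x
                    + RN_deriv (restr_to_subalg M (F t)) Q2 x * indicator (space M - A) x)
          \<in> borel_measurable (restr_to_subalg M (F t))"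
    proof -
      have [measurable]: "A \<in> sets (restr_to_subalg M (F t))" "space M - A \<in> sets (restr_to_subalg M (F t))"
        using At Act by (auto simp: sets_restr_to_subalg[OF t])
      show ?thesis by measurable
    qed
    show "(\<lambda>x. ennreal (1 + g x)) \<in> borel_measurable (restr_to_subalg M (F t))"
      by (rule measurable_in_subalg[OF t]) measurable
    show "AE x in restr_to_subalg M (F t). RN_deriv (restr_to_subalg M (F t)) Q1 x * indicator A x
                    + RN_deriv (restr_to_subalg M (F t)) Q2 x * indicator (space M - A) x = ennreal (1 + g x)"
      using g1(7) g2(7) AE_space[of "restr_to_subalg M (F t)"]
      by eventually_elim (auto simp: g_def indicator_def space_restr_to_subalg)
  qed
  then show ?thesis using Qin by auto
qed



lemma prod_int:
  fixes a b :: "'a \<Rightarrow> real"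
  assumes "a \<in> borel_measurable M" "b \<in> borel_measurable M"
    "integrable M (\<lambda>x. (a x)\<^sup>2)" "integrable M (\<lambda>x. (b x)\<^sup>2)"
  shows "integrable M (\<lambda>x. a x * b x)"
proof -
  have "integrable M (\<lambda>x. (a x)\<^sup>2 + (b x)\<^sup>2)" using assms by auto
  moreover have "norm (a x * b x) \<le> norm ((a x)\<^sup>2 + (b x)\<^sup>2)" for x
  proof -
    have "0 \<le> (\<bar>a x\<bar> - \<bar>b x\<bar>)\<^sup>2" by simp
    then have "2 * \<bar>a x\<bar> * \<bar>b x\<bar> \<le> (a x)\<^sup>2 + (b x)\<^sup>2"
      by (simp add: power2_eq_square algebra_simps)
    moreover have "0 \<le> \<bar>a x\<bar> * \<bar>b x\<bar>" by simp
    ultimately have "\<bar>a x\<bar> * \<bar>b x\<bar> \<le> (a x)\<^sup>2 + (b x)\<^sup>2" by linarith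
    then show ?thesis by (simp add: abs_mult add_nonneg_nonneg)
  qed
  ultimately show ?thesis
    using Bochner_Integration.integrable_bound[of M "\<lambda>x. (a x)\<^sup>2 + (b x)\<^sup>2" "\<lambda>x. a x * b x"] assms by auto
qed

lemma delta_ineq:
  fixes x y :: real
  assumes "0 \<le> x" "0 \<le> y"
  shows "(1 + y\<^sup>2) * x\<^sup>2 + y\<^sup>2 \<le> (x * y + x + y)\<^sup>2"
proof -
  have e: "(x * y + x + y)\<^sup>2 = (1 + y\<^sup>2) * x\<^sup>2 + y\<^sup>2 + 2 * (x*x*y + x*y*y + x*y)"
    by (simp add: power2_eq_square algebra_simps)
  have "0 \<le> x*x*y + x*y*y + x*y" using assms by (simp add: add_nonneg_nonneg)
  then show ?thesis unfolding e by simp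
qed

lemma nn_ce_bound:
  fixes v :: "'a \<Rightarrow> real"
  assumes P: "prob_space M" and s: "subalgebra M Fs"
    and v: "v \<in> borel_measurable M" "\<And>x. 0 \<le> v x" "integrable M v"
    and c: "AE x in M. real_cond_exp M Fs v x \<le> c"
  shows "AE x in M. nn_cond_exp M Fs (\<lambda>x. ennreal (v x)) x \<le> ennreal c"
proof -
  interpret S: sigma_finite_subalgebra M Fs using sfs[OF P s] .
  have z: "AE x in M. (\<lambda>x. 0) x = nn_cond_exp M Fs (\<lambda>x. 0) x"
    by (rule S.nn_cond_exp_F_meas) simp
  have e: "(\<lambda>x. ennreal (- v x)) = (\<lambda>x. 0)" using v(2) by (auto simp: ennreal_eq_0_iff)
  have "(\<integral>\<^sup>+x. 1 * nn_cond_exp M Fs (\<lambda>x. ennreal (v x)) x \<partial>M) = (\<integral>\<^sup>+x. 1 * ennreal (v x) \<partial>M)"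
    by (rule S.nn_cond_exp_intg) (use v in auto)
  also have "\<dots> < \<infinity>" using v by (simp add: integrable_iff_bounded)
  finally have "integral\<^sup>N M (nn_cond_exp M Fs (\<lambda>x. ennreal (v x))) \<noteq> \<infinity>" by simp
  then have fin: "AE x in M. nn_cond_exp M Fs (\<lambda>x. ennreal (v x)) x \<noteq> \<infinity>"
    by (intro nn_integral_PInf_AE) (auto intro: measurable_from_subalg[OF s])
  show ?thesis using z fin c
  proof eventually_elim
    case (elim x)
    then have r: "real_cond_exp M Fs v x = enn2real (nn_cond_exp M Fs (\<lambda>x. ennreal (v x)) x)"
      unfolding real_cond_exp_def e by simp
    have "nn_cond_exp M Fs (\<lambda>x. ennreal (v x)) x = ennreal (enn2real (nn_cond_exp M Fs (\<lambda>x. ennreal (v x)) x))"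
      using elim by (simp add: less_top)
    also have "\<dots> \<le> ennreal c" using elim r by (intro ennreal_leI) simp
    finally show ?case .
  qed
qed

lemma prodint_ce:
  fixes u v :: "'a \<Rightarrow> real"
  assumes P: "prob_space M" and s: "subalgebra M Fs"
    and u: "u \<in> borel_measurable Fs" "\<And>x. 0 \<le> u x" "integrable M u"
    and v: "v \<in> borel_measurable M" "\<And>x. 0 \<le> v x" "integrable M v"
    and c: "AE x in M. real_cond_exp M Fs v x \<le> c"
  shows "integrable M (\<lambda>x. u x * v x)"
proof -
  interpret S: sigma_finite_subalgebra M Fs using sfs[OF P s] .
  have uM[measurable]: "u \<in> borel_measurable M" using measurable_from_subalg[OF s u(1)] .
  have [measurable]: "u \<in> borel_measurable Fs" "v \<in> borel_measurable M" using u v by auto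
  have b: "AE x in M. nn_cond_exp M Fs (\<lambda>x. ennreal (v x)) x \<le> ennreal c"
    by (rule nn_ce_bound[OF P s v c])
  have "(\<integral>\<^sup>+x. ennreal (u x * v x) \<partial>M) = (\<integral>\<^sup>+x. ennreal (u x) * ennreal (v x) \<partial>M)"
    by (intro nn_integral_cong ennreal_mult u(2) v(2))
  also have "\<dots> = (\<integral>\<^sup>+x. ennreal (u x) * nn_cond_exp M Fs (\<lambda>x. ennreal (v x)) x \<partial>M)"
    by (rule S.nn_cond_exp_intg[symmetric]) auto
  also have "\<dots> \<le> (\<integral>\<^sup>+x. ennreal (u x) * ennreal c \<partial>M)"
  proof (rule nn_integral_mono_AE)
    show "AE x in M. ennreal (u x) * nn_cond_exp M Fs (\<lambda>x. ennreal (v x)) x \<le> ennreal (u x) * ennreal c"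
      using b by eventually_elim (rule mult_left_mono, auto)
  qed
  also have "\<dots> = (\<integral>\<^sup>+x. ennreal (u x) \<partial>M) * ennreal c"
    by (simp add: nn_integral_multc)
  also have "\<dots> < \<infinity>"
  proof -
    have "(\<integral>\<^sup>+x. ennreal (norm (u x)) \<partial>M) < \<infinity>" using u(3) by (simp add: integrable_iff_bounded)
    then have "(\<integral>\<^sup>+x. ennreal (u x) \<partial>M) < \<infinity>" using u(2) by simp
    then show ?thesis by (simp add: ennreal_mult_less_top top_unique)
  qed
  finally have "(\<integral>\<^sup>+x. ennreal (u x * v x) \<partial>M) < \<infinity>" .
  then show ?thesis
    by (intro integrableI_nonneg) (auto simp: u(2) v(2))
qed

lemma part1:
  assumes P: "prob_space M" and r: "subalgebra M (F r)" and s: "subalgebra M (F s)"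
    and t: "subalgebra M (F t)"
    and rs: "sets (F r) \<subseteq> sets (F s)" and st: "sets (F s) \<subseteq> sets (F t)"
    and drs: "0 \<le> \<delta> r s" and dst: "0 \<le> \<delta> s t"
    and tri: "\<delta> r s * \<delta> s t + \<delta> r s + \<delta> s t = \<delta> r t"
    and hQ: "Q \<in> Qcls M F \<delta> r s" and hR: "R \<in> Qcls M F \<delta> s t"
  shows "density (restr_to_subalg M (F t))
              (\<lambda>x. RN_deriv (restr_to_subalg M (F s)) Q x * RN_deriv (restr_to_subalg M (F t)) R x)
            \<in> Qcls M F \<delta> r t"
proof -
  interpret prob_space M by fact
  interpret Sr: sigma_finite_subalgebra M "F r" using sfs[OF P r] .
  interpret Ss: sigma_finite_subalgebra M "F s" using sfs[OF P s] .
  have rt: "sets (F r) \<subseteq> sets (F t)" using rs st by auto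
  obtain g where g: "g \<in> borel_measurable (F s)" "integrable M (\<lambda>x. (g x)\<^sup>2)" "integrable M g"
    "AE x in M. 0 \<le> 1 + g x"
    "Q = density (restr_to_subalg M (F s)) (\<lambda>x. ennreal (1 + g x))"
    "AE x in M. real_cond_exp M (F r) (\<lambda>x. (g x)\<^sup>2) x \<le> (\<delta> r s)\<^sup>2"
    "AE x in restr_to_subalg M (F s). RN_deriv (restr_to_subalg M (F s)) Q x = ennreal (1 + g x)"
    "\<And>A. A \<in> sets (F r) \<Longrightarrow> (\<integral>x. indicator A x * g x \<partial>M) = 0"
    "AE x in M. real_cond_exp M (F r) g x = 0"
    by (rule unpack[of M F r s Q \<delta>, OF P r s rs hQ]) blast
  obtain h where h: "h \<in> borel_measurable (F t)" "integrable M (\<lambda>x. (h x)\<^sup>2)" "integrable M h"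
    "AE x in M. 0 \<le> 1 + h x"
    "R = density (restr_to_subalg M (F t)) (\<lambda>x. ennreal (1 + h x))"
    "AE x in M. real_cond_exp M (F s) (\<lambda>x. (h x)\<^sup>2) x \<le> (\<delta> s t)\<^sup>2"
    "AE x in restr_to_subalg M (F t). RN_deriv (restr_to_subalg M (F t)) R x = ennreal (1 + h x)"
    "\<And>A. A \<in> sets (F s) \<Longrightarrow> (\<integral>x. indicator A x * h x \<partial>M) = 0"
    "AE x in M. real_cond_exp M (F s) h x = 0"
    by (rule unpack[of M F s t R \<delta>, OF P s t st hR]) blast
  have gFs[measurable]: "g \<in> borel_measurable (F s)" by (rule g(1))
  have gFt[measurable]: "g \<in> borel_measurable (F t)" by (rule meas_mono[OF s t st g(1)])
  have gM[measurable]: "g \<in> borel_measurable M" by (rule measurable_from_subalg[OF s g(1)])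
  have hFt[measurable]: "h \<in> borel_measurable (F t)" by (rule h(1))
  have hM[measurable]: "h \<in> borel_measurable M" by (rule measurable_from_subalg[OF t h(1)])
  define \<epsilon> where "\<epsilon> = (\<delta> s t)\<^sup>2"
  have igh2: "integrable M (\<lambda>x. (g x)\<^sup>2 * (h x)\<^sup>2)"
    by (rule prodint_ce[OF P s _ _ g(2) _ _ h(2) h(6)]) auto
  have igh2': "integrable M (\<lambda>x. (g x * h x)\<^sup>2)" using igh2 by (simp add: power_mult_distrib)
  have igh: "integrable M (\<lambda>x. g x * h x)" by (rule prod_int) (use g(2) h(2) in auto)
  have iggh: "integrable M (\<lambda>x. g x * (g x * h x))" by (rule prod_int) (use g(2) igh2' in auto)
  have ighh: "integrable M (\<lambda>x. (g x * h x) * h x)" by (rule prod_int) (use igh2' h(2) in auto)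
  define k where "k x = g x + h x + g x * h x" for x
  define B where "B x = 2 * g x * (1 + g x)" for x
  define C where "C x = (1 + g x)\<^sup>2" for x
  have BFs[measurable]: "B \<in> borel_measurable (F s)" unfolding B_def by measurable
  have CFs[measurable]: "C \<in> borel_measurable (F s)" unfolding C_def by measurable
  have kFt[measurable]: "k \<in> borel_measurable (F t)" unfolding k_def by measurable
  have keq: "(\<lambda>x. (k x)\<^sup>2) = (\<lambda>x. ((g x)\<^sup>2 + B x * h x) + C x * (h x)\<^sup>2)"
    by (rule ext) (simp add: k_def B_def C_def power2_eq_square algebra_simps)
  have iBh: "integrable M (\<lambda>x. B x * h x)"
  proof -
    have "(\<lambda>x. B x * h x) = (\<lambda>x. 2 * (g x * h x) + 2 * (g x * (g x * h x)))"
      by (rule ext) (simp add: B_def algebra_simps)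
    then show ?thesis using igh iggh by simp
  qed
  have iCh: "integrable M (\<lambda>x. C x * (h x)\<^sup>2)"
  proof -
    have "(\<lambda>x. C x * (h x)\<^sup>2) = (\<lambda>x. (h x)\<^sup>2 + 2 * ((g x * h x) * h x) + (g x)\<^sup>2 * (h x)\<^sup>2)"
      by (rule ext) (simp add: C_def power2_eq_square algebra_simps)
    then show ?thesis using h(2) ighh igh2 by simp
  qed
  have ig2Bh: "integrable M (\<lambda>x. (g x)\<^sup>2 + B x * h x)" using g(2) iBh by simp
  have ik2: "integrable M (\<lambda>x. (k x)\<^sup>2)" unfolding keq using ig2Bh iCh by simp
  have knn: "AE x in M. 0 \<le> 1 + k x"
  proof -
    have e: "1 + k x = (1 + g x) * (1 + h x)" for x by (simp add: k_def algebra_simps)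
    show ?thesis using g(4) h(4) unfolding e by eventually_elim simp
  qed
  have mz: "(\<integral>x. indicator A x * k x \<partial>M) = 0" if A: "A \<in> sets (F r)" for A
  proof -
    have AFs[measurable]: "A \<in> sets (F s)" using A rs by auto
    have AM[measurable]: "A \<in> sets M" using AFs s unfolding subalgebra_def by auto
    have i1: "integrable M (\<lambda>x. indicator A x * g x)" using integrable_mult_indicator[OF AM g(3)] by simp
    have i2: "integrable M (\<lambda>x. indicator A x * h x)" using integrable_mult_indicator[OF AM h(3)] by simp
    have i3': "integrable M (\<lambda>x. indicator A x * (g x * h x))" using integrable_mult_indicator[OF AM igh] by simp
    have i3: "integrable M (\<lambda>x. (indicator A x * g x) * h x)" using i3' by (simp add: mult.assoc)
    have "(\<integral>x. indicator A x * k x \<partial>M)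
        = (\<integral>x. (indicator A x * g x + indicator A x * h x) + (indicator A x * g x) * h x \<partial>M)"
      by (intro Bochner_Integration.integral_cong) (auto simp: k_def algebra_simps)
    also have "\<dots> = (\<integral>x. indicator A x * g x \<partial>M) + (\<integral>x. indicator A x * h x \<partial>M)
                     + (\<integral>x. (indicator A x * g x) * h x \<partial>M)"
      using i1 i2 i3 by simp
    also have "(\<integral>x. (indicator A x * g x) * h x \<partial>M) = (\<integral>x. (indicator A x * g x) * real_cond_exp M (F s) h x \<partial>M)"
      by (rule Ss.real_cond_exp_intg(2)[symmetric]) (use i3 in auto)
    also have "\<dots> = (\<integral>x. 0 \<partial>M)"
      using h(9) by (intro integral_cong_AE) (auto elim!: eventually_mono)
    finally show ?thesis using g(8)[OF A] h(8)[OF AFs] by simp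
  qed
  have rsub: "subalgebra (F s) (F r)" by (rule subalg_sub[OF r s rs])
  have a1: "AE x in M. real_cond_exp M (F s) (\<lambda>x. (k x)\<^sup>2) x
      = real_cond_exp M (F s) (\<lambda>x. (g x)\<^sup>2 + B x * h x) x + real_cond_exp M (F s) (\<lambda>x. C x * (h x)\<^sup>2) x"
    unfolding keq by (rule Ss.real_cond_exp_add[OF ig2Bh iCh])
  have a2: "AE x in M. real_cond_exp M (F s) (\<lambda>x. (g x)\<^sup>2 + B x * h x) x
      = real_cond_exp M (F s) (\<lambda>x. (g x)\<^sup>2) x + real_cond_exp M (F s) (\<lambda>x. B x * h x) x"
    by (rule Ss.real_cond_exp_add[OF g(2) iBh])
  have a3: "AE x in M. real_cond_exp M (F s) (\<lambda>x. (g x)\<^sup>2) x = (g x)\<^sup>2"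
    by (rule Ss.real_cond_exp_F_meas[OF g(2)]) measurable
  have a4: "AE x in M. real_cond_exp M (F s) (\<lambda>x. B x * h x) x = B x * real_cond_exp M (F s) h x"
    by (rule Ss.real_cond_exp_mult) (use iBh in auto)
  have a5: "AE x in M. real_cond_exp M (F s) (\<lambda>x. C x * (h x)\<^sup>2) x = C x * real_cond_exp M (F s) (\<lambda>x. (h x)\<^sup>2) x"
    by (rule Ss.real_cond_exp_mult) (use iCh in auto)
  define u where "u x = (1 + \<epsilon>) * (g x)\<^sup>2 + 2 * \<epsilon> * g x + \<epsilon>" for x
  have Es: "AE x in M. real_cond_exp M (F s) (\<lambda>x. (k x)\<^sup>2) x \<le> u x"
    using a1 a2 a3 a4 a5 h(9) h(6)
  proof eventually_elim
    case (elim x)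
    have C0: "0 \<le> C x" by (simp add: C_def)
    have "C x * real_cond_exp M (F s) (\<lambda>x. (h x)\<^sup>2) x \<le> C x * \<epsilon>"
      using elim(7) C0 unfolding \<epsilon>_def by (intro mult_left_mono) auto
    moreover have "u x = (g x)\<^sup>2 + C x * \<epsilon>" by (simp add: u_def C_def power2_eq_square algebra_simps)
    ultimately show ?case using elim by simp
  qed
  have iu: "integrable M u" unfolding u_def using g(2) g(3) by simp
  have b1: "AE x in M. real_cond_exp M (F r) (real_cond_exp M (F s) (\<lambda>x. (k x)\<^sup>2)) x \<le> real_cond_exp M (F r) u x"
    by (rule Sr.real_cond_exp_mono[OF Es Ss.real_cond_exp_int(1)[OF ik2] iu])
  have b2: "AE x in M. real_cond_exp M (F r) (real_cond_exp M (F s) (\<lambda>x. (k x)\<^sup>2)) x = real_cond_exp M (F r) (\<lambda>x. (k x)\<^sup>2) x"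
    by (rule Sr.real_cond_exp_nested_subalg[OF s rsub ik2])
  have ic: "integrable M (\<lambda>x. \<epsilon>)" by simp
  have iu1: "integrable M (\<lambda>x. (1 + \<epsilon>) * (g x)\<^sup>2 + 2 * \<epsilon> * g x)" using g(2) g(3) by simp
  have c1: "AE x in M. real_cond_exp M (F r) u x
     = real_cond_exp M (F r) (\<lambda>x. (1 + \<epsilon>) * (g x)\<^sup>2 + 2 * \<epsilon> * g x) x + real_cond_exp M (F r) (\<lambda>x. \<epsilon>) x"
    unfolding u_def by (rule Sr.real_cond_exp_add[OF iu1 ic])
  have c2: "AE x in M. real_cond_exp M (F r) (\<lambda>x. (1 + \<epsilon>) * (g x)\<^sup>2 + 2 * \<epsilon> * g x) x
     = real_cond_exp M (F r) (\<lambda>x. (1 + \<epsilon>) * (g x)\<^sup>2) x + real_cond_exp M (F r) (\<lambda>x. 2 * \<epsilon> * g x) x"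
    by (rule Sr.real_cond_exp_add) (use g(2) g(3) in auto)
  have c3: "AE x in M. real_cond_exp M (F r) (\<lambda>x. (1 + \<epsilon>) * (g x)\<^sup>2) x = (1 + \<epsilon>) * real_cond_exp M (F r) (\<lambda>x. (g x)\<^sup>2) x"
    by (rule Sr.real_cond_exp_cmult[OF g(2)])
  have c4: "AE x in M. real_cond_exp M (F r) (\<lambda>x. 2 * \<epsilon> * g x) x = 2 * \<epsilon> * real_cond_exp M (F r) g x"
    by (rule Sr.real_cond_exp_cmult[OF g(3)])
  have c5: "AE x in M. real_cond_exp M (F r) (\<lambda>x. \<epsilon>) x = \<epsilon>"
    by (rule Sr.real_cond_exp_F_meas[OF ic]) simp
  have fin: "(1 + \<epsilon>) * (\<delta> r s)\<^sup>2 + \<epsilon> \<le> (\<delta> r t)\<^sup>2"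
    using delta_ineq[OF drs dst] tri unfolding \<epsilon>_def by simp
  have ce: "AE x in M. real_cond_exp M (F r) (\<lambda>x. (k x)\<^sup>2) x \<le> (\<delta> r t)\<^sup>2"
    using b1 b2 c1 c2 c3 c4 c5 g(6) g(9)
  proof eventually_elim
    case (elim x)
    have e0: "0 \<le> \<epsilon>" by (simp add: \<epsilon>_def)
    have "(1 + \<epsilon>) * real_cond_exp M (F r) (\<lambda>x. (g x)\<^sup>2) x \<le> (1 + \<epsilon>) * (\<delta> r s)\<^sup>2"
      using elim(8) e0 by (intro mult_left_mono) auto
    then show ?case using elim fin by simp
  qed
  have Qin: "density (restr_to_subalg M (F t)) (\<lambda>x. ennreal (1 + k x)) \<in> Qcls M F \<delta> r t"
    by (rule pack[of M F r t k \<delta>, OF P r t rt kFt ik2 knn mz ce])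
  have "density (restr_to_subalg M (F t))
              (\<lambda>x. RN_deriv (restr_to_subalg M (F s)) Q x * RN_deriv (restr_to_subalg M (F t)) R x)
       = density (restr_to_subalg M (F t)) (\<lambda>x. ennreal (1 + k x))"
  proof (rule density_cong)
    have "RN_deriv (restr_to_subalg M (F s)) Q \<in> borel_measurable (F s)"
      by (rule measurable_in_subalg'[OF s]) simp
    then have "RN_deriv (restr_to_subalg M (F s)) Q \<in> borel_measurable (F t)"
      by (rule meas_mono[OF s t st])
    then have [measurable]: "RN_deriv (restr_to_subalg M (F s)) Q \<in> borel_measurable (restr_to_subalg M (F t))"
      by (rule measurable_in_subalg[OF t])
    show "(\<lambda>x. RN_deriv (restr_to_subalg M (F s)) Q x * RN_deriv (restr_to_subalg M (F t)) R x)
       \<in> borel_measurable (restr_to_subalg M (F t))" by measurable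
    show "(\<lambda>x. ennreal (1 + k x)) \<in> borel_measurable (restr_to_subalg M (F t))"
      by (rule measurable_in_subalg[OF t]) measurable
    have e1: "AE x in restr_to_subalg M (F t). RN_deriv (restr_to_subalg M (F s)) Q x = ennreal (1 + g x)"
      by (rule AE_restr_mono[OF s t st g(7)])
    have e3: "AE x in restr_to_subalg M (F t). 0 \<le> 1 + g x"
      by (rule AE_restr_to_subalg2[OF t g(4)]) measurable
    have e4: "AE x in restr_to_subalg M (F t). 0 \<le> 1 + h x"
      by (rule AE_restr_to_subalg2[OF t h(4)]) measurable
    show "AE x in restr_to_subalg M (F t).
       RN_deriv (restr_to_subalg M (F s)) Q x * RN_deriv (restr_to_subalg M (F t)) R x = ennreal (1 + k x)"
      using e1 h(7) e3 e4
    proof eventually_elim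
      case (elim x)
      have "1 + k x = (1 + g x) * (1 + h x)" by (simp add: k_def algebra_simps)
      then show ?case using elim by (simp add: ennreal_mult)
    qed
  qed
  then show ?thesis using Qin by simp
qed


theorem lemma6p6:
  fixes M :: "'a measure" and F :: "real \<Rightarrow> 'a measure" and T :: real
    and \<delta> :: "real \<Rightarrow> real \<Rightarrow> real"
  assumes "prob_space M"
    and "\<And>t. 0 \<le> t \<Longrightarrow> t \<le> T \<Longrightarrow> subalgebra M (F t)"
    and "\<And>s t. 0 \<le> s \<Longrightarrow> s \<le> t \<Longrightarrow> t \<le> T \<Longrightarrow> sets (F s) \<subseteq> sets (F t)"
    and "\<And>s t. 0 \<le> s \<Longrightarrow> s \<le> t \<Longrightarrow> t \<le> T \<Longrightarrow> 0 \<le> \<delta> s t"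
    and "\<And>r s t. 0 \<le> r \<Longrightarrow> r \<le> s \<Longrightarrow> s \<le> t \<Longrightarrow> t \<le> T \<Longrightarrow>
           \<delta> r s * \<delta> s t + \<delta> r s + \<delta> s t = \<delta> r t"
  shows "(\<forall>r s t Q R. 0 \<le> r \<and> r \<le> s \<and> s \<le> t \<and> t \<le> T \<and>
            Q \<in> Qcls M F \<delta> r s \<and> R \<in> Qcls M F \<delta> s t \<longrightarrow>
            density (restr_to_subalg M (F t))
              (\<lambda>x. RN_deriv (restr_to_subalg M (F s)) Q x * RN_deriv (restr_to_subalg M (F t)) R x)
            \<in> Qcls M F \<delta> r t)
       \<and> (\<forall>s t A Q1 Q2. 0 \<le> s \<and> s \<le> t \<and> t \<le> T \<and> A \<in> sets (F s) \<and>
            Q1 \<in> Qcls M F \<delta> s t \<and> Q2 \<in> Qcls M F \<delta> s t \<longrightarrow>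
            (\<exists>Q\<in>Qcls M F \<delta> s t.
               Q = density (restr_to_subalg M (F t))
                 (\<lambda>x. RN_deriv (restr_to_subalg M (F t)) Q1 x * indicator A x
                    + RN_deriv (restr_to_subalg M (F t)) Q2 x * indicator (space M - A) x)))"
proof (intro conjI allI impI)
  fix r s t Q R
  assume h: "0 \<le> r \<and> r \<le> s \<and> s \<le> t \<and> t \<le> T \<and> Q \<in> Qcls M F \<delta> r s \<and> R \<in> Qcls M F \<delta> s t"
  then have h1: "0 \<le> r" "r \<le> s" "s \<le> t" "t \<le> T" "Q \<in> Qcls M F \<delta> r s" "R \<in> Qcls M F \<delta> s t" by auto
  show "density (restr_to_subalg M (F t))
              (\<lambda>x. RN_deriv (restr_to_subalg M (F s)) Q x * RN_deriv (restr_to_subalg M (F t)) R x)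
            \<in> Qcls M F \<delta> r t"
  proof (rule part1[OF assms(1)])
    show "subalgebra M (F r)" using h1 assms(2) by auto
    show "subalgebra M (F s)" using h1 assms(2) by auto
    show "subalgebra M (F t)" using h1 assms(2) by auto
    show "sets (F r) \<subseteq> sets (F s)" using h1 assms(3)[of r s] by auto
    show "sets (F s) \<subseteq> sets (F t)" using h1 assms(3)[of s t] by auto
    show "0 \<le> \<delta> r s" using h1 assms(4)[of r s] by auto
    show "0 \<le> \<delta> s t" using h1 assms(4)[of s t] by auto
    show "\<delta> r s * \<delta> s t + \<delta> r s + \<delta> s t = \<delta> r t" using h1 assms(5)[of r s t] by auto
  qed (use h1 in auto)
next
  fix s t A Q1 Q2
  assume h: "0 \<le> s \<and> s \<le> t \<and> t \<le> T \<and> A \<in> sets (F s) \<and>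
            Q1 \<in> Qcls M F \<delta> s t \<and> Q2 \<in> Qcls M F \<delta> s t"
  then have h1: "0 \<le> s" "s \<le> t" "t \<le> T" "A \<in> sets (F s)" "Q1 \<in> Qcls M F \<delta> s t" "Q2 \<in> Qcls M F \<delta> s t" by auto
  show "\<exists>Q\<in>Qcls M F \<delta> s t.
               Q = density (restr_to_subalg M (F t))
                 (\<lambda>x. RN_deriv (restr_to_subalg M (F t)) Q1 x * indicator A x
                    + RN_deriv (restr_to_subalg M (F t)) Q2 x * indicator (space M - A) x)"
  proof (rule part2[OF assms(1)])
    show "subalgebra M (F s)" using h1 assms(2) by auto
    show "subalgebra M (F t)" using h1 assms(2) by auto
    show "sets (F s) \<subseteq> sets (F t)" using h1 assms(3)[of s t] by auto
  qed (use h1 in auto)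
qed

end
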